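(* Let $\kappa>0$, $u_0>0$, and let $u=u(r;u_0)$ be the solution of $$\frac{d}{dr}\Big(\frac{u'}{\sqrt{1+u'^2}}\Big)=\kappa u,\qquad u(0)=u_0,\ u'(0)=0,$$ on its maximal interval $[0,R)$. Let $0<a\le R$ and $0\le\gamma<\pi/2$ be such that the surface $z=u(x)$ meets the vertical wall $x=a$ with contact angle $\gamma$, i.e. $\sin\psi(a)=\cos\gamma$ where $\sin\psi=u'/\sqrt{1+u'^2}$ (extended continuously to $r=a$). Then $$q:=u(a)-u(0)=\frac{\frac2\kappa(1-\sin\gamma)}{u_0+\sqrt{u_0^2+\frac2\kappa(1-\sin\gamma)}}<\sqrt{\frac2\kappa(1-\sin\gamma)}.$$
   Context: The function $u$ is the profile of a $\kappa$-cylindrical surface (capillary surface $z=u(x)$ translation invariant in $y$) over the strip $|x|<a$ between two vertical plates; $\psi$ is the inclination angle of the graph of $u$. On $[0,R)$, $u$ is increasing and $u'\to\infty$ as $r\to R$ (so $\gamma=0$ corresponds to $a=R$). *)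

theory Defs
  imports "HOL-Analysis.Analysis"
begin

end

theory Submission
  imports Defs
begin

lemma s_facts:
  fixes v :: real
  shows "1 - (v / sqrt (1 + v\<^sup>2))\<^sup>2 = 1 / (1 + v\<^sup>2)"
    and "sqrt (1 - (v / sqrt (1 + v\<^sup>2))\<^sup>2) = 1 / sqrt (1 + v\<^sup>2)"
    and "(v / sqrt (1 + v\<^sup>2)) / sqrt (1 - (v / sqrt (1 + v\<^sup>2))\<^sup>2) = v"
proof -
  have p: "1 + v\<^sup>2 > 0" by (simp add: add_pos_nonneg)
  have sq: "(sqrt (1 + v\<^sup>2))\<^sup>2 = 1 + v\<^sup>2" using p by simp
  show 1: "1 - (v / sqrt (1 + v\<^sup>2))\<^sup>2 = 1 / (1 + v\<^sup>2)"
    using p by (simp add: power_divide sq field_simps)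
  show 2: "sqrt (1 - (v / sqrt (1 + v\<^sup>2))\<^sup>2) = 1 / sqrt (1 + v\<^sup>2)"
    unfolding 1 by (simp add: real_sqrt_divide)
  show "(v / sqrt (1 + v\<^sup>2)) / sqrt (1 - (v / sqrt (1 + v\<^sup>2))\<^sup>2) = v"
    unfolding 2 using p by simp
qed

theorem mainTheorem7:
  fixes u u' :: "real \<Rightarrow> real" and \<kappa> u0 R a \<gamma> :: real
  assumes kappa_pos: "\<kappa> > 0" and u0_pos: "u0 > 0"
    and u_deriv: "\<forall>r\<in>{0..<R}. (u has_real_derivative u' r) (at r within {0..<R})"
    and ode: "\<forall>r\<in>{0..<R}. ((\<lambda>t. u' t / sqrt (1 + (u' t)\<^sup>2)) has_real_derivative \<kappa> * u r)
                (at r within {0..<R})"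
    and init: "u 0 = u0" "u' 0 = 0"
    and maximal: "filterlim u' at_top (at_left R)"
    and a_bounds: "0 < a" "a \<le> R"
    and gamma_bounds: "0 \<le> \<gamma>" "\<gamma> < pi / 2"
    and u_cont_a: "continuous (at_left a) u"
    and contact: "((\<lambda>r. u' r / sqrt (1 + (u' r)\<^sup>2)) \<longlongrightarrow> cos \<gamma>) (at_left a)"
  shows "u a - u 0 = (2 / \<kappa> * (1 - sin \<gamma>)) / (u0 + sqrt (u0\<^sup>2 + 2 / \<kappa> * (1 - sin \<gamma>)))
         \<and> u a - u 0 < sqrt (2 / \<kappa> * (1 - sin \<gamma>))"
proof -
  define S where "S = {0..<R}"
  define s where "s t = u' t / sqrt (1 + (u' t)\<^sup>2)" for t
  define E where "E r = \<kappa> * (u r)\<^sup>2 / 2 + sqrt (1 - (s r)\<^sup>2)" for r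
  have R0: "0 < R" using a_bounds by simp
  have dE: "(E has_derivative (\<lambda>h. 0)) (at r within S)" if r: "r \<in> S" for r
  proof -
    have ds: "(s has_real_derivative \<kappa> * u r) (at r within S)"
      using ode r unfolding S_def s_def by blast
    have du: "(u has_real_derivative u' r) (at r within S)"
      using u_deriv r unfolding S_def by blast
    have pos: "1 - (s r)\<^sup>2 > 0" unfolding s_def s_facts(1)
      by (simp add: add_pos_nonneg)
    have "(E has_real_derivative
        (\<kappa> * (2 * u r * u' r) / 2 + (- (2 * s r * (\<kappa> * u r))) / (2 * sqrt (1 - (s r)\<^sup>2))))
        (at r within S)"
      unfolding E_def
      using pos ds du
      apply (auto intro!: derivative_eq_intros simp: power2_eq_square)
      by (simp add: divide_inverse mult_ac)
    moreover have "s r / sqrt (1 - (s r)\<^sup>2) = u' r"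
      unfolding s_def by (rule s_facts(3))
    moreover have "sqrt (1 - (s r)\<^sup>2) > 0" using pos by simp
    ultimately have "(E has_real_derivative 0) (at r within S)"
      by (simp add: field_simps)
    moreover have "(*) (0::real) = (\<lambda>h. 0)" by auto
    ultimately show ?thesis by (simp add: has_field_derivative_def)
  qed
  have Econst: "E r = E 0" if "r \<in> S" for r
    using has_derivative_zero_unique[of S E r 0] dE that R0
    by (auto simp: S_def)
  have E0: "E 0 = \<kappa> * u0\<^sup>2 / 2 + 1"
    using init by (simp add: E_def s_def)
  have ucont: "continuous_on S u"
    using u_deriv unfolding S_def
    by (meson DERIV_continuous continuous_on_eq_continuous_within)
  have usq: "(u r)\<^sup>2 \<ge> u0\<^sup>2" if "r \<in> S" for r
  proof -
    have "1 \<le> sqrt (1 + (u' r)\<^sup>2)" by simp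
    hence "1 / sqrt (1 + (u' r)\<^sup>2) \<le> 1" by (simp add: divide_le_eq_1 add_pos_nonneg)
    hence "sqrt (1 - (s r)\<^sup>2) \<le> 1" unfolding s_def s_facts(2) .
    then show ?thesis using Econst[OF that] E0 kappa_pos unfolding E_def
      proof -
      assume h: "sqrt (1 - (s r)\<^sup>2) \<le> 1"
        "\<kappa> * (u r)\<^sup>2 / 2 + sqrt (1 - (s r)\<^sup>2) = \<kappa> * (u 0)\<^sup>2 / 2 + sqrt (1 - (s 0)\<^sup>2)"
        "\<kappa> * (u 0)\<^sup>2 / 2 + sqrt (1 - (s 0)\<^sup>2) = \<kappa> * u0\<^sup>2 / 2 + 1" "0 < \<kappa>"
      hence "\<kappa> * u0\<^sup>2 \<le> \<kappa> * (u r)\<^sup>2" by linarith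
      thus ?thesis using h(4) by simp
    qed
  qed
  have upos: "u r > 0" if r: "r \<in> S" for r
  proof (rule ccontr)
    assume "\<not> u r > 0"
    hence "u r \<le> 0" by simp
    moreover have "continuous_on {0..r} u"
      using r by (intro continuous_on_subset[OF ucont]) (auto simp: S_def)
    moreover have "0 \<le> r" using r by (simp add: S_def)
    ultimately obtain x where x: "0 \<le> x" "x \<le> r" "u x = 0"
      using IVT2'[of u r 0 0] init u0_pos by auto
    then have "x \<in> S" using r by (auto simp: S_def)
    then have "u0\<^sup>2 \<le> 0" using usq x by fastforce
    moreover have "u0\<^sup>2 > 0" using u0_pos by simp
    ultimately show False by simp
  qed
  have uge: "u r \<ge> u0" if "r \<in> S" for r
    using usq[OF that] upos[OF that] u0_pos
    by (meson less_le power2_le_imp_le)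
  have ev: "eventually (\<lambda>r. r \<in> S) (at_left a)"
    unfolding S_def eventually_at_left_field
    using a_bounds by (intro exI[of _ 0]) auto
  have ulim: "(u \<longlongrightarrow> u a) (at_left a)"
    using u_cont_a by (simp add: continuous_within)
  have sinpos: "sin \<gamma> \<ge> 0" using gamma_bounds by (intro sin_ge_zero) auto
  have "((\<lambda>r. sqrt (1 - (s r)\<^sup>2)) \<longlongrightarrow> sqrt (1 - (cos \<gamma>)\<^sup>2)) (at_left a)"
    using contact unfolding s_def[abs_def] by (intro tendsto_intros)
  moreover have "sqrt (1 - (cos \<gamma>)\<^sup>2) = sin \<gamma>"
    using sinpos by (simp add: sin_squared_eq[symmetric])
  ultimately have "(E \<longlongrightarrow> \<kappa> * (u a)\<^sup>2 / 2 + sin \<gamma>) (at_left a)"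
    unfolding E_def[abs_def] using ulim by (auto intro!: tendsto_intros)
  moreover have "(E \<longlongrightarrow> \<kappa> * u0\<^sup>2 / 2 + 1) (at_left a)"
  proof (rule Lim_transform_eventually)
    show "((\<lambda>r. \<kappa> * u0\<^sup>2 / 2 + 1) \<longlongrightarrow> \<kappa> * u0\<^sup>2 / 2 + 1) (at_left a)" by simp
    show "\<forall>\<^sub>F r in at_left a. \<kappa> * u0\<^sup>2 / 2 + 1 = E r"
      using ev by eventually_elim (simp add: Econst E0)
  qed
  ultimately have key: "\<kappa> * (u a)\<^sup>2 / 2 + sin \<gamma> = \<kappa> * u0\<^sup>2 / 2 + 1"
    using tendsto_unique[OF trivial_limit_at_left_real] by blast
  have uage: "u a \<ge> u0"
    using ulim by (rule tendsto_lowerbound) (auto intro: eventually_mono[OF ev] uge)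
  define D where "D = 2 / \<kappa> * (1 - sin \<gamma>)"
  have sin1: "sin \<gamma> < 1"
  proof -
    have "sin \<gamma> < sin (pi/2)" using gamma_bounds
      by (intro sin_monotone_2pi) auto
    then show ?thesis by simp
  qed
  have Dpos: "D > 0" unfolding D_def using sin1 kappa_pos by simp
  have ua2: "(u a)\<^sup>2 = u0\<^sup>2 + D"
    using key kappa_pos unfolding D_def by (simp add: field_simps)
  have ua: "u a = sqrt (u0\<^sup>2 + D)"
    using ua2 uage u0_pos by (metis less_le_trans less_imp_le real_sqrt_abs abs_of_nonneg)
  have sumpos: "u0 + u a > 0" using uage u0_pos by simp
  have eq: "u a - u0 = D / (u0 + u a)"
    using sumpos ua2 by (simp add: field_simps power2_eq_square)
  have "sqrt D < u a" unfolding ua using u0_pos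
    by (intro real_sqrt_less_mono) simp
  hence "sqrt D < u0 + u a" using u0_pos by simp
  hence "D / (u0 + u a) < D / sqrt D"
    using Dpos sumpos by (intro divide_strict_left_mono) auto
  moreover have "D / sqrt D = sqrt D" using Dpos
    by (metis real_div_sqrt less_imp_le)
  ultimately show ?thesis using eq ua init unfolding D_def by simp
qed

end
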